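(* Let $m<n$ be natural numbers, let $\mathcal{I}$ be the ideal of thin subsets of $[\omega]^n$, and let $\psi=\lambda^{(n-m)}\partial^{(n-m)}$. Then there is $S\subseteq[\omega]^n$ which is not $(<\!\aleph_0)$-near-closed.
   Context: $T\subseteq[\omega]^n$ is thick if for every $j\geq n$ there is $s\in[\omega]^j$ with $[s]^n\subseteq T$; thin otherwise. For $T\subseteq[\omega]^n$, $\partial^{(n-m)}T=\{s\in[\omega]^m:\exists t\in[\omega]^{n-m}\ (s\cup t\in T)\}$, and for $A\subseteq[\omega]^m$, $\lambda^{(n-m)}A=\{s\in[\omega]^n:[s]^m\subseteq A\}$. A set $T\subseteq[\omega]^n$ is closed if $\psi(T)=T$. A set $S$ is $(<\!\aleph_0)$-near-closed if there are $k<\omega$ and closed $T_0,\dots,T_{k-1}$ with $S\,\Delta\,(T_0\cup\dots\cup T_{k-1})\in\mathcal{I}$. *)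

theory Defs
  imports Main "HOL-Library.Ramsey"
begin

text \<open>[omega]^n is nsets UNIV n (finite sets of naturals of cardinality n).\<close>

definition thick :: "nat \<Rightarrow> nat set set \<Rightarrow> bool" where
  "thick n T \<longleftrightarrow> (\<forall>j\<ge>n. \<exists>s\<in>nsets (UNIV::nat set) j. nsets s n \<subseteq> T)"

definition thin :: "nat \<Rightarrow> nat set set \<Rightarrow> bool" where
  "thin n T \<longleftrightarrow> \<not> thick n T"

definition in_thin_ideal :: "nat \<Rightarrow> nat set set \<Rightarrow> bool" where
  "in_thin_ideal n T \<longleftrightarrow> T \<subseteq> nsets UNIV n \<and> thin n T"

definition shadow :: "nat \<Rightarrow> nat \<Rightarrow> nat set set \<Rightarrow> nat set set" where
  "shadow n m T = {s \<in> nsets UNIV m. \<exists>t\<in>nsets UNIV (n - m). s \<union> t \<in> T}"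

definition lam :: "nat \<Rightarrow> nat \<Rightarrow> nat set set \<Rightarrow> nat set set" where
  "lam n m A = {s \<in> nsets UNIV n. nsets s m \<subseteq> A}"

definition psi :: "nat \<Rightarrow> nat \<Rightarrow> nat set set \<Rightarrow> nat set set" where
  "psi n m T = lam n m (shadow n m T)"

definition psi_closed :: "nat \<Rightarrow> nat \<Rightarrow> nat set set \<Rightarrow> bool" where
  "psi_closed n m T \<longleftrightarrow> T \<subseteq> nsets UNIV n \<and> psi n m T = T"

definition near_closed :: "nat \<Rightarrow> nat \<Rightarrow> nat set set \<Rightarrow> bool" where
  "near_closed n m S \<longleftrightarrow> (\<exists>k::nat. \<exists>Ts::nat \<Rightarrow> nat set set.
     (\<forall>i<k. psi_closed n m (Ts i)) \<and>
     in_thin_ideal n ((S - (\<Union>i<k. Ts i)) \<union> ((\<Union>i<k. Ts i) - S)))"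

end

theory Submission
  imports Defs "HOL-Computational_Algebra.Polynomial"
begin


lemma greedy:
  fixes P :: "'m \<Rightarrow> 'a set" and Adv :: "'a set set"
  assumes "finite F" "finite Adv" "\<forall>M\<in>F. finite (P M) \<and> 2 ^ card (P M) \<le> D"
    "\<forall>M\<in>F. \<forall>M'\<in>F. M \<noteq> M' \<longrightarrow> P M \<inter> P M' = {}"
    "card Adv * (D-1)^card F < D^card F"
  shows "\<exists>\<chi>. \<chi> \<subseteq> \<Union>(P ` F) \<and> (\<forall>V\<in>Adv. \<exists>M\<in>F. P M \<subseteq> (\<chi> - V) \<union> (V - \<chi>))"
using assms proof (induction F arbitrary: Adv rule: finite_induct)
  case empty
  have "card Adv = 0" using empty.prems(4) by simp
  hence "Adv = {}" using empty.prems(1) by simp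
  thus ?case by blast
next
  case (insert M F)
  define cls where "cls X = {V \<in> Adv. V \<inter> P M = X}" for X
  have fin: "finite (P M)" and DD: "2 ^ card (P M) \<le> D" using insert.prems(2) by auto
  have "finite (Pow (P M))" "Pow (P M) \<noteq> {}" using fin by auto
  then obtain X0 where X0: "X0 \<in> Pow (P M)" "\<forall>X\<in>Pow (P M). card (cls X) \<le> card (cls X0)"
  proof -
    let ?I = "(\<lambda>X. card (cls X)) ` Pow (P M)"
    have "finite ?I" "?I \<noteq> {}" using \<open>finite (Pow (P M))\<close> \<open>Pow (P M) \<noteq> {}\<close> by auto
    then have "Max ?I \<in> ?I" "\<forall>X\<in>Pow (P M). card (cls X) \<le> Max ?I" by auto
    then show ?thesis using that by auto
  qed
  have "Adv = (\<Union>X\<in>Pow (P M). cls X)"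
  proof
    show "Adv \<subseteq> (\<Union>X\<in>Pow (P M). cls X)"
    proof
      fix V assume "V \<in> Adv"
      hence "V \<in> cls (V \<inter> P M)" unfolding cls_def by simp
      moreover have "V \<inter> P M \<in> Pow (P M)" by simp
      ultimately show "V \<in> (\<Union>X\<in>Pow (P M). cls X)" by blast
    qed
    show "(\<Union>X\<in>Pow (P M). cls X) \<subseteq> Adv" unfolding cls_def by blast
  qed
  hence "card Adv \<le> (\<Sum>X\<in>Pow (P M). card (cls X))"
    using card_UN_le[OF \<open>finite (Pow (P M))\<close>, of cls] by simp
  also have "\<dots> \<le> (\<Sum>X\<in>Pow (P M). card (cls X0))" by (intro sum_mono) (use X0 in auto)
  also have "\<dots> = 2 ^ card (P M) * card (cls X0)" using fin by (simp add: card_Pow)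
  also have "\<dots> \<le> D * card (cls X0)" using DD by simp
  finally have cA: "card Adv \<le> D * card (cls X0)" .
  define Adv' where "Adv' = Adv - cls X0"
  have sub: "cls X0 \<subseteq> Adv" unfolding cls_def by auto
  have fA': "finite Adv'" using insert.prems(1) unfolding Adv'_def by auto
  have cA': "card Adv' = card Adv - card (cls X0)" unfolding Adv'_def
    using card_Diff_subset[OF finite_subset[OF sub insert.prems(1)] sub] .
  have D1: "D \<ge> 1" proof -
    have "1 \<le> (2::nat)^card (P M)" by simp
    thus ?thesis using DD by linarith
  qed
  have k1: "card Adv' * D = card Adv * D - card (cls X0) * D" using cA' by (simp add: diff_mult_distrib)
  have k2: "card Adv * (D - 1) = card Adv * D - card Adv" by (simp add: diff_mult_distrib2)
  have k3: "card Adv \<le> card (cls X0) * D" using cA by (simp add: mult.commute)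
  have key: "card Adv' * D \<le> card Adv * (D - 1)"
    unfolding k1 k2 using k3 by (rule diff_le_mono2)
  have "card Adv' * (D-1)^card F * D = (card Adv' * D) * (D-1)^card F" by (simp add: ac_simps)
  also have "\<dots> \<le> card Adv * (D-1) * (D-1)^card F"
    using key by (rule mult_le_mono1)
  also have "\<dots> = card Adv * (D-1)^card (insert M F)" by (simp add: insert.hyps)
  also have "\<dots> < D ^ card (insert M F)" using insert.prems(4) by simp
  also have "\<dots> = D^card F * D" by (simp add: insert.hyps)
  finally have "card Adv' * (D-1)^card F < D^card F" by simp
  then obtain \<chi>' where ch': "\<chi>' \<subseteq> \<Union>(P ` F)" "\<forall>V\<in>Adv'. \<exists>M\<in>F. P M \<subseteq> (\<chi>' - V) \<union> (V - \<chi>')"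
    using insert.IH[OF fA'] insert.prems by auto
  define \<chi> where "\<chi> = (\<chi>' - P M) \<union> (P M - X0)"
  show ?case
  proof (intro exI conjI ballI)
    show "\<chi> \<subseteq> \<Union> (P ` insert M F)" using ch' unfolding \<chi>_def by auto
  next
    fix V assume V: "V \<in> Adv"
    show "\<exists>M\<in>insert M F. P M \<subseteq> \<chi> - V \<union> (V - \<chi>)"
    proof (cases "V \<in> cls X0")
      case True
      hence "V \<inter> P M = X0" unfolding cls_def by auto
      hence "P M \<subseteq> \<chi> - V \<union> (V - \<chi>)" unfolding \<chi>_def by auto
      thus ?thesis by auto
    next
      case False
      hence "V \<in> Adv'" using V unfolding Adv'_def by auto
      then obtain M' where M': "M' \<in> F" "P M' \<subseteq> (\<chi>' - V) \<union> (V - \<chi>')" using ch' by auto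
      have "M' \<noteq> M" using M' insert.hyps by auto
      hence "P M' \<inter> P M = {}" using insert.prems(3) M' by auto
      hence "P M' \<subseteq> \<chi> - V \<union> (V - \<chi>)" using M' unfolding \<chi>_def by auto
      thus ?thesis using M' by auto
    qed
  qed
qed



lemma poly_agree:
  fixes a a' :: "nat \<Rightarrow> nat"
  assumes "i < n" "a i \<noteq> a' i"
  shows "finite {x::nat. (\<Sum>k<n. a k * x^k) = (\<Sum>k<n. a' k * x^k)} \<and> card {x::nat. (\<Sum>k<n. a k * x^k) = (\<Sum>k<n. a' k * x^k)} < n"
proof -
  define p :: "int poly" where "p = (\<Sum>k<n. monom (int (a k) - int (a' k)) k)"
  have cp: "coeff p l = (if l < n then int (a l) - int (a' l) else 0)" for l
    unfolding p_def by (simp add: coeff_sum coeff_monom)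
  have pne: "p \<noteq> 0" using cp[of i] assms by (metis coeff_0 diff_0_eq_0 eq_iff_diff_eq_0 of_nat_eq_iff)
  have dg: "degree p < n"
  proof -
    have "degree p \<le> n - 1" by (rule degree_le) (use cp in auto)
    moreover have "n \<ge> 1" using assms by simp
    ultimately show ?thesis by simp
  qed
  have pv: "poly p (int x) = int (\<Sum>k<n. a k * x^k) - int (\<Sum>k<n. a' k * x^k)" for x
    unfolding p_def by (simp add: poly_sum poly_monom sum_subtractf algebra_simps)
  have incl: "int ` {x::nat. (\<Sum>k<n. a k * x^k) = (\<Sum>k<n. a' k * x^k)} \<subseteq> {y. poly p y = 0}"
  proof
    fix y assume "y \<in> int ` {x::nat. (\<Sum>k<n. a k * x^k) = (\<Sum>k<n. a' k * x^k)}"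
    then obtain x where y: "y = int x" and e: "(\<Sum>k<n. a k * x^k) = (\<Sum>k<n. a' k * x^k)" by auto
    show "y \<in> {y. poly p y = 0}" using pv[of x] e y by (metis (mono_tags) diff_self mem_Collect_eq)
  qed
  hence fin: "finite {x::nat. (\<Sum>k<n. a k * x^k) = (\<Sum>k<n. a' k * x^k)}"
    using poly_roots_finite[OF pne] finite_subset finite_imageD inj_on_def by (metis (no_types, lifting) of_nat_eq_iff)
  from incl have "card (int ` {x::nat. (\<Sum>k<n. a k * x^k) = (\<Sum>k<n. a' k * x^k)}) \<le> card {y. poly p y = 0}"
    by (intro card_mono) (use poly_roots_finite pne in auto)
  also have "\<dots> \<le> degree p" by (rule card_poly_roots_bound[OF pne])
  finally show ?thesis using dg fin by (simp add: card_image)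
qed



lemma bern: "(y::nat)^N * (y + N) \<le> y * (y+1)^N"
proof (induction N)
  case 0 then show ?case by simp
next
  case (Suc N)
  have "y^(Suc N) * (y + Suc N) = y^N * (y*(y+N+1))" by (simp add: algebra_simps)
  also have "\<dots> \<le> y^N * ((y+1)*(y+N))"
    by (intro mult_le_mono2) (simp add: algebra_simps)
  also have "\<dots> = (y+1) * (y^N * (y+N))" by (simp add: algebra_simps)
  also have "\<dots> \<le> (y+1) * (y * (y+1)^N)" using Suc by (intro mult_le_mono2) simp
  also have "\<dots> = y * (y+1)^Suc N" by (simp add: algebra_simps)
  finally show ?case .
qed

lemma two_pow: assumes "(D::nat) \<ge> 1" shows "2*(D-1)^D \<le> D^D"
proof -
  obtain y where D: "D = y + 1" using assms by (metis add.commute le_Suc_ex)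
  show ?thesis
  proof (cases "y = 0")
    case True then show ?thesis using D by simp
  next
    case False
    have b: "y^(y+1) * (y + (y+1)) \<le> y * (y+1)^(y+1)" by (rule bern)
    have "y * (2 * y^(y+1)) \<le> y^(y+1) * (y + (y+1))" by (simp add: algebra_simps)
    with b have "y * (2 * y^(y+1)) \<le> y * (y+1)^(y+1)" by linarith
    hence "2 * y^(y+1) \<le> (y+1)^(y+1)" using False by simp
    then show ?thesis using D by simp
  qed
qed

lemma count_ineq:
  assumes "(D::nat) \<ge> 2" "N \<ge> D * (s+1)"
  shows "2^s * (D-1)^N < D^N"
proof -
  have "(2*(D-1)^D)^(s+1) \<le> (D^D)^(s+1)" using two_pow assms(1) by (intro power_mono) auto
  hence a: "2^(s+1) * (D-1)^(D*(s+1)) \<le> D^(D*(s+1))"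
    by (simp only: power_mult_distrib power_mult)
  have b: "(D-1)^(N - D*(s+1)) \<le> D^(N - D*(s+1))" by (intro power_mono) auto
  have "2^(s+1) * (D-1)^N = (2^(s+1) * (D-1)^(D*(s+1))) * (D-1)^(N - D*(s+1))"
    using assms(2) by (simp add: power_add[symmetric])
  also have "\<dots> \<le> D^(D*(s+1)) * D^(N - D*(s+1))" using a b by (rule mult_le_mono)
  also have "\<dots> = D^N" using assms(2) by (simp add: power_add[symmetric])
  finally have c: "2^(s+1) * (D-1)^N \<le> D^N" .
  have "(D-1)^N > 0" using assms(1) by simp
  hence "2^s * (D-1)^N < 2^(s+1) * (D-1)^N" by simp
  with c show ?thesis by linarith
qed



definition blockprop :: "nat \<Rightarrow> nat \<Rightarrow> nat \<Rightarrow> nat \<Rightarrow> nat set \<Rightarrow> nat set set \<Rightarrow> nat \<Rightarrow> bool" where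
  "blockprop n m r b G \<chi> b' \<longleftrightarrow> G \<subseteq> {b..<b'} \<and> b \<le> b' \<and> \<chi> \<subseteq> nsets G n \<and>
    (\<forall>A \<in> PiE {..<r} (\<lambda>_. Pow (nsets G m)). \<exists>M \<in> nsets G (r+n).
       nsets M n \<subseteq> (\<chi> - {Z \<in> nsets G n. \<exists>i<r. nsets Z m \<subseteq> A i})
                    \<union> ({Z \<in> nsets G n. \<exists>i<r. nsets Z m \<subseteq> A i} - \<chi>))"

lemma bp1: "blockprop n m r b G \<chi> b' \<Longrightarrow> G \<subseteq> {b..<b'}" by (simp add: blockprop_def)
lemma bp2: "blockprop n m r b G \<chi> b' \<Longrightarrow> b \<le> b'" by (simp add: blockprop_def)
lemma bp3: "blockprop n m r b G \<chi> b' \<Longrightarrow> \<chi> \<subseteq> nsets G n" by (simp add: blockprop_def)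
lemma bp4: "blockprop n m r b G \<chi> b' \<Longrightarrow> A \<in> PiE {..<r} (\<lambda>_. Pow (nsets G m)) \<Longrightarrow>
  \<exists>M \<in> nsets G (r+n). nsets M n \<subseteq> (\<chi> - {Z \<in> nsets G n. \<exists>i<r. nsets Z m \<subseteq> A i})
                    \<union> ({Z \<in> nsets G n. \<exists>i<r. nsets Z m \<subseteq> A i} - \<chi>)"
  unfolding blockprop_def by blast

lemma block:
  fixes m n r b :: nat
  assumes mn: "m < n"
  shows "\<exists>G \<chi> b'. blockprop n m r b G \<chi> b'"
proof -
  define j where "j = r + n"
  define D where "D = (2::nat)^(j choose n)"
  define E where "E = (2*n*j^(n+1))^m"
  define c where "c = D*(r*E+1)"
  define R where "R = c*n*j^n + 1"
  define f where "f a x = (\<Sum>k<n. a k * x^k)" for a :: "nat \<Rightarrow> nat" and x :: nat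
  define pt where "pt x y = b + x + j*y" for x y :: nat
  define Ms where "Ms a = (\<lambda>x. pt x (f a x)) ` {..<j}" for a
  define Co where "Co = PiE {..<n} (\<lambda>_. {..<c})"
  define F where "F = Ms ` Co"
  define G where "G = \<Union> F"
  have n1: "n \<ge> 1" using mn by simp
  have j1: "j \<ge> n" "j \<ge> 1" using n1 unfolding j_def by auto
  have D2: "D \<ge> 2"
  proof -
    have "j choose n \<ge> 1" using j1 by (simp add: Suc_leI)
    hence "(2::nat)^1 \<le> 2^(j choose n)" by (intro power_increasing) auto
    thus ?thesis unfolding D_def by simp
  qed
  have c1: "c \<ge> 1" unfolding c_def using D2 by simp
  have fR: "f a x < R" if a: "a \<in> Co" and x: "x < j" for a x
  proof -
    have "f a x \<le> (\<Sum>k<n. c * j^n)" unfolding f_def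
    proof (intro sum_mono)
      fix k assume k: "k \<in> {..<n}"
      have "a k < c" using a k unfolding Co_def by auto
      moreover have "x^k \<le> j^n"
      proof -
        have "x^k \<le> j^k" using x by (intro power_mono) auto
        also have "\<dots> \<le> j^n" using k j1 by (intro power_increasing) auto
        finally show ?thesis .
      qed
      ultimately show "a k * x^k \<le> c * j^n" by (intro mult_le_mono) auto
    qed
    also have "\<dots> = c*n*j^n" by simp
    finally show ?thesis unfolding R_def by simp
  qed
  have ptinj: "x = x' \<and> y = y'" if "x < j" "x' < j" "pt x y = pt x' y'" for x x' y y'
  proof -
    have e: "x + j*y = x' + j*y'" using that unfolding pt_def by simp
    hence "(x + j*y) mod j = (x' + j*y') mod j" by simp
    hence "x = x'" using that by simp
    with e j1 show ?thesis by simp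
  qed
  have ptlt: "pt x y < b + j*R" if "x < j" "y < R" for x y
  proof -
    have "x + j*y < j + j*y" using that by simp
    also have "\<dots> = j*(y+1)" by (simp add: algebra_simps)
    also have "\<dots> \<le> j*R" using that by (intro mult_le_mono2) simp
    finally show ?thesis unfolding pt_def by simp
  qed
  have GB: "G \<subseteq> {b..<b+j*R}"
  proof
    fix z assume "z \<in> G"
    then obtain a x where a: "a \<in> Co" and x: "x < j" and z: "z = pt x (f a x)"
      unfolding G_def F_def Ms_def by auto
    show "z \<in> {b..<b+j*R}" using ptlt[OF x fR[OF a x]] z unfolding pt_def by simp
  qed
  have finM: "finite (Ms a)" for a unfolding Ms_def by simp
  have cardM: "card (Ms a) = j" for a
  proof -
    have "inj_on (\<lambda>x. pt x (f a x)) {..<j}"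
    proof (rule inj_onI)
      fix x x' assume "x \<in> {..<j}" "x' \<in> {..<j}" "pt x (f a x) = pt x' (f a x')"
      thus "x = x'" using ptinj[of x x' "f a x" "f a x'"] by blast
    qed
    thus ?thesis unfolding Ms_def by (simp add: card_image)
  qed
  have inter: "card (Ms a \<inter> Ms a') < n" if a: "a \<in> Co" "a' \<in> Co" "a \<noteq> a'" for a a'
  proof -
    obtain i where i: "i < n" "a i \<noteq> a' i"
      using a PiE_ext[of a "{..<n}" "\<lambda>_. {..<c}" a'] unfolding Co_def by auto
    have pa: "finite {x. f a x = f a' x} \<and> card {x. f a x = f a' x} < n"
      using poly_agree[of i n a a', OF i] unfolding f_def by simp
    have "Ms a \<inter> Ms a' \<subseteq> (\<lambda>x. pt x (f a x)) ` {x. f a x = f a' x}"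
    proof
      fix z assume "z \<in> Ms a \<inter> Ms a'"
      then obtain x x' where x: "x < j" "x' < j" and z: "z = pt x (f a x)" "z = pt x' (f a' x')"
        unfolding Ms_def by auto
      have "x = x' \<and> f a x = f a' x'" using ptinj[OF x, of "f a x" "f a' x'"] z by blast
      thus "z \<in> (\<lambda>x. pt x (f a x)) ` {x. f a x = f a' x}" using z by auto
    qed
    hence "card (Ms a \<inter> Ms a') \<le> card ((\<lambda>x. pt x (f a x)) ` {x. f a x = f a' x})"
      using pa by (intro card_mono) auto
    also have "\<dots> \<le> card {x. f a x = f a' x}" using pa by (intro card_image_le) auto
    finally show ?thesis using pa by simp
  qed
  have Minj: "inj_on Ms Co"
  proof (rule inj_onI)
    fix a a' assume "a \<in> Co" "a' \<in> Co" "Ms a = Ms a'"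
    show "a = a'"
    proof (rule ccontr)
      assume "a \<noteq> a'"
      hence "card (Ms a \<inter> Ms a') < n" using inter \<open>a \<in> Co\<close> \<open>a' \<in> Co\<close> by blast
      thus False using cardM[of a] j1 \<open>Ms a = Ms a'\<close> by simp
    qed
  qed
  have cardF: "card F = c^n"
    unfolding F_def using Minj by (simp add: card_image Co_def card_PiE)
  have finF: "finite F" unfolding F_def Co_def by (simp add: finite_PiE)
  have disj: "\<forall>M\<in>F. \<forall>M'\<in>F. M \<noteq> M' \<longrightarrow> nsets M n \<inter> nsets M' n = {}"
  proof (intro ballI impI)
    fix M M' assume M: "M \<in> F" "M' \<in> F" "M \<noteq> M'"
    then obtain a a' where a: "a \<in> Co" "a' \<in> Co" "M = Ms a" "M' = Ms a'" unfolding F_def by auto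
    hence "a \<noteq> a'" using M by auto
    hence ci: "card (M \<inter> M') < n" using inter a by simp
    show "nsets M n \<inter> nsets M' n = {}"
    proof (rule ccontr)
      assume "nsets M n \<inter> nsets M' n \<noteq> {}"
      then obtain Z where "Z \<subseteq> M" "Z \<subseteq> M'" "card Z = n" by (auto simp: nsets_def)
      hence "card Z \<le> card (M \<inter> M')" using finM a by (intro card_mono) auto
      hence "n \<le> card (M \<inter> M')" using \<open>card Z = n\<close> by simp
      thus False using ci by simp
    qed
  qed
  have PM: "\<forall>M\<in>F. finite (nsets M n) \<and> 2 ^ card (nsets M n) \<le> D"
    using finM cardM unfolding F_def D_def by (auto simp: finite_imp_finite_nsets)
  have finG: "finite G" using GB finite_subset by blast
  have cG: "card G \<le> j*R" using card_mono[OF _ GB] by simp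
  define U where "U A = {Z \<in> nsets G n. \<exists>i<r. nsets Z m \<subseteq> A i}" for A
  define Adv where "Adv = U ` PiE {..<r} (\<lambda>_. Pow (nsets G m))"
  have finPi: "finite (PiE {..<r} (\<lambda>_. Pow (nsets G m)))"
    using finG by (simp add: finite_PiE finite_imp_finite_nsets)
  have finAdv: "finite Adv" unfolding Adv_def using finPi by simp
  define s where "s = r*E*c^m"
  have cAdv: "card Adv \<le> 2^s"
  proof -
    have "card Adv \<le> card (PiE {..<r} (\<lambda>_. Pow (nsets G m)))"
      unfolding Adv_def using finPi by (rule card_image_le)
    also have "\<dots> = (2^(card G choose m))^r"
      using finG by (simp add: card_PiE card_Pow finite_imp_finite_nsets)
    also have "\<dots> = 2^((card G choose m)*r)" by (simp add: power_mult)
    also have "\<dots> \<le> 2^s"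
    proof (intro power_increasing)
      have "card G choose m \<le> card G ^ m"
      proof (cases "m \<le> card G")
        case True then show ?thesis by (rule binomial_le_pow)
      next
        case False then show ?thesis by (simp add: binomial_eq_0)
      qed
      also have "\<dots> \<le> (j*R)^m" using cG by (intro power_mono) auto
      also have "\<dots> \<le> (2*n*j^(n+1)*c)^m"
      proof (intro power_mono)
        have "c*n*j^n \<ge> 1" using c1 n1 j1 by simp
        hence "j*R \<le> j*(2*(c*n*j^n))" unfolding R_def by (intro mult_le_mono2) simp
        thus "j*R \<le> 2*n*j^(n+1)*c" by (simp add: algebra_simps)
      qed simp
      also have "\<dots> = E*c^m" unfolding E_def by (simp add: power_mult_distrib)
      finally have "card G choose m \<le> E*c^m" .
      thus "(card G choose m)*r \<le> s" unfolding s_def by (simp add: algebra_simps)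
    qed simp
    finally show ?thesis .
  qed
  have cn: "c^n \<ge> D*(s+1)"
  proof -
    have "c^(Suc m) \<le> c^n" using mn c1 by (intro power_increasing) auto
    moreover have "c^(Suc m) = D*(r*E*c^m + c^m)" unfolding c_def by (simp add: algebra_simps)
    moreover have "c^m \<ge> 1" using c1 by simp
    moreover have "D*(s+1) \<le> D*(r*E*c^m + c^m)" unfolding s_def using \<open>c^m \<ge> 1\<close>
      by (intro mult_le_mono2) simp
    ultimately show ?thesis by simp
  qed
  have ineq: "card Adv * (D-1)^card F < D^card F"
  proof -
    have "card Adv * (D-1)^card F \<le> 2^s * (D-1)^card F" using cAdv by simp
    also have "\<dots> < D^card F" unfolding cardF by (rule count_ineq[OF D2 cn])
    finally show ?thesis .
  qed
  obtain \<chi> where ch: "\<chi> \<subseteq> \<Union>((\<lambda>M. nsets M n) ` F)"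
    "\<forall>V\<in>Adv. \<exists>M\<in>F. nsets M n \<subseteq> (\<chi> - V) \<union> (V - \<chi>)"
    using greedy[OF finF finAdv PM disj ineq] by blast
  have chG: "\<chi> \<subseteq> nsets G n"
  proof
    fix Z assume "Z \<in> \<chi>"
    then obtain M where "M \<in> F" "Z \<in> nsets M n" using ch(1) by blast
    then show "Z \<in> nsets G n" unfolding G_def nsets_def by auto
  qed
  show ?thesis
    unfolding blockprop_def
  proof (intro exI conjI ballI)
    show "G \<subseteq> {b..<b+j*R}" by (rule GB)
    show "b \<le> b+j*R" by simp
    show "\<chi> \<subseteq> nsets G n" by (rule chG)
  next
    fix A assume A: "A \<in> PiE {..<r} (\<lambda>_. Pow (nsets G m))"
    hence "U A \<in> Adv" unfolding Adv_def by auto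
    then obtain M where M: "M \<in> F" "nsets M n \<subseteq> (\<chi> - U A) \<union> (U A - \<chi>)" using ch(2) by blast
    have "M \<in> nsets G (r+n)" using M(1) finM cardM unfolding G_def F_def j_def nsets_def by auto
    thus "\<exists>M \<in> nsets G (r+n). nsets M n \<subseteq> (\<chi> - {Z \<in> nsets G n. \<exists>i<r. nsets Z m \<subseteq> A i})
                    \<union> ({Z \<in> nsets G n. \<exists>i<r. nsets Z m \<subseteq> A i} - \<chi>)"
      using M(2) unfolding U_def by blast
  qed
qed



primrec off_seq :: "(nat \<Rightarrow> nat \<Rightarrow> nat) \<Rightarrow> nat \<Rightarrow> nat" where
  "off_seq h 0 = 0"
| "off_seq h (Suc r) = h r (off_seq h r)"

theorem mainTheorem12:
  fixes m n :: nat
  assumes "m < n"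
  shows "\<exists>S. S \<subseteq> nsets (UNIV::nat set) n \<and> \<not> near_closed n m S"
proof -
  have ex: "\<exists>t. blockprop n m r b (fst t) (fst (snd t)) (snd (snd t))" for r b
  proof -
    obtain G \<chi> b' where "blockprop n m r b G \<chi> b'" using block[OF assms, of r b] by blast
    thus ?thesis by (intro exI[of _ "(G, \<chi>, b')"]) simp
  qed
  define T where "T r b = (SOME t. blockprop n m r b (fst t) (fst (snd t)) (snd (snd t)))" for r b
  have QT: "blockprop n m r b (fst (T r b)) (fst (snd (T r b))) (snd (snd (T r b)))" for r b
    unfolding T_def using someI_ex[OF ex] .
  define off where "off = off_seq (\<lambda>r b. snd (snd (T r b)))"
  define GG where "GG r = fst (T r (off r))" for r
  define XX where "XX r = fst (snd (T r (off r)))" for r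
  have offS: "off (Suc r) = snd (snd (T r (off r)))" for r unfolding off_def by simp
  have Qr: "blockprop n m r (off r) (GG r) (XX r) (off (Suc r))" for r
    unfolding GG_def XX_def offS using QT .
  have GGb: "GG r \<subseteq> {off r..<off (Suc r)}" for r using bp1[OF Qr] .
  have offS1: "off r \<le> off (Suc r)" for r using bp2[OF Qr] .
  have XXG: "XX r \<subseteq> nsets (GG r) n" for r using bp3[OF Qr] .
  have offmono: "off r \<le> off r'" if "r \<le> r'" for r r'
    using lift_Suc_mono_le[of off, OF offS1 that] .
  have GGdisj: "GG r \<inter> GG r' = {}" if "r \<noteq> r'" for r r'
  proof -
    have lt: "GG r \<inter> GG r' = {}" if "r < r'" for r r'
    proof -
      have o: "off (Suc r) \<le> off r'" using that by (intro offmono) simp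
      { fix z assume "z \<in> GG r" "z \<in> GG r'"
        hence "z < off (Suc r)" "off r' \<le> z" using GGb[of r] GGb[of r'] by auto
        hence False using o by simp }
      thus ?thesis by blast
    qed
    show ?thesis
    proof (cases "r < r'")
      case True then show ?thesis by (rule lt)
    next
      case False then have "r' < r" using that by simp
      then show ?thesis using lt[of r' r] by blast
    qed
  qed
  define S where "S = (\<Union>r. XX r)"
  have Ssub: "S \<subseteq> nsets UNIV n" unfolding S_def using XXG by (fastforce simp: nsets_def)
  have n1: "n \<ge> 1" using assms by simp
  have Siff: "Z \<in> S \<longleftrightarrow> Z \<in> XX r" if Z: "Z \<in> nsets (GG r) n" for Z r
  proof
    assume "Z \<in> S"
    then obtain r' where r': "Z \<in> XX r'" unfolding S_def by auto
    hence "Z \<subseteq> GG r'" using XXG[of r'] by (auto simp: nsets_def)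
    moreover have "Z \<subseteq> GG r" "Z \<noteq> {}" using Z n1 by (auto simp: nsets_def)
    ultimately have "r' = r" using GGdisj[of r' r] by blast
    thus "Z \<in> XX r" using r' by simp
  qed (auto simp: S_def)
  have "\<not> near_closed n m S"
  proof
    assume "near_closed n m S"
    then obtain k :: nat and Ts :: "nat \<Rightarrow> nat set set" where cl: "\<forall>i<k. psi_closed n m (Ts i)"
      and th: "in_thin_ideal n ((S - (\<Union>i<k. Ts i)) \<union> ((\<Union>i<k. Ts i) - S))"
      unfolding near_closed_def by blast
    define W where "W = (S - (\<Union>i<k. Ts i)) \<union> ((\<Union>i<k. Ts i) - S)"
    obtain j0 where j0: "j0 \<ge> n" "\<forall>s\<in>nsets (UNIV::nat set) j0. \<not> nsets s n \<subseteq> W"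
      using th unfolding in_thin_ideal_def thin_def thick_def W_def by auto
    define r where "r = max k j0"
    define A where "A = (\<lambda>i\<in>{..<r}. if i < k then shadow n m (Ts i) \<inter> nsets (GG r) m else {})"
    have A: "A \<in> PiE {..<r} (\<lambda>_. Pow (nsets (GG r) m))"
      unfolding A_def by (subst restrict_PiE_iff) auto
    define V where "V = {Z \<in> nsets (GG r) n. \<exists>i<r. nsets Z m \<subseteq> A i}"
    obtain M where M: "M \<in> nsets (GG r) (r+n)" "nsets M n \<subseteq> (XX r - V) \<union> (V - XX r)"
      using bp4[OF Qr A] unfolding V_def by blast
    have Viff: "Z \<in> V \<longleftrightarrow> Z \<in> (\<Union>i<k. Ts i)" if Z: "Z \<in> nsets (GG r) n" for Z
    proof
      assume "Z \<in> V"
      then obtain i where i: "i < r" "nsets Z m \<subseteq> A i" unfolding V_def by auto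
      have fZ: "finite Z" "card Z = n" using Z by (auto simp: nsets_def)
      have ne: "nsets Z m \<noteq> {}" using fZ assms by (simp add: nsets_eq_empty_iff)
      have ik: "i < k" using i ne unfolding A_def by (auto split: if_splits)
      hence "nsets Z m \<subseteq> shadow n m (Ts i)" using i unfolding A_def by auto
      moreover have "Z \<in> nsets UNIV n" using Z by (auto simp: nsets_def)
      ultimately have "Z \<in> psi n m (Ts i)" unfolding psi_def lam_def by auto
      hence "Z \<in> Ts i" using cl ik unfolding psi_closed_def by auto
      thus "Z \<in> (\<Union>i<k. Ts i)" using ik by auto
    next
      assume "Z \<in> (\<Union>i<k. Ts i)"
      then obtain i where i: "i < k" "Z \<in> Ts i" by auto
      hence "Z \<in> psi n m (Ts i)" using cl unfolding psi_closed_def by auto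
      hence "nsets Z m \<subseteq> shadow n m (Ts i)" unfolding psi_def lam_def by auto
      moreover have "nsets Z m \<subseteq> nsets (GG r) m" using Z by (auto simp: nsets_def)
      ultimately have "nsets Z m \<subseteq> A i" using i unfolding A_def r_def by auto
      moreover have "i < r" using i unfolding r_def by simp
      ultimately show "Z \<in> V" using Z unfolding V_def by auto
    qed
    have cM: "card M = r + n" "finite M" "M \<subseteq> GG r" using M(1) by (auto simp: nsets_def)
    have "j0 \<le> card M" using cM unfolding r_def by simp
    then obtain s where s: "s \<subseteq> M" "card s = j0" using obtain_subset_with_card_n by metis
    have sn: "s \<in> nsets (UNIV::nat set) j0" using s cM finite_subset by (auto simp: nsets_def)
    have "nsets s n \<subseteq> W"
    proof
      fix Z assume "Z \<in> nsets s n"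
      hence ZM: "Z \<in> nsets M n" using s by (auto simp: nsets_def)
      hence ZG: "Z \<in> nsets (GG r) n" using cM by (auto simp: nsets_def)
      show "Z \<in> W" using M(2) ZM Siff[OF ZG] Viff[OF ZG] unfolding W_def by blast
    qed
    thus False using j0 sn by blast
  qed
  thus ?thesis using Ssub by blast
qed

end
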